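(* The language $L_5\subseteq\{a,b\}^*$ does not belong to $Pol(\mathcal{C}om)(\{a,b\})$.
   Context: $L_5$ is the language recognized by the deterministic automaton with states $1,2,3,4,5$, initial state $1$, accepting set $\{5\}$, and transitions $\delta(1,a)=\delta(1,b)=2$, $\delta(2,a)=5$, $\delta(2,b)=3$, $\delta(3,a)=4$, $\delta(3,b)=5$, $\delta(4,a)=3$, $\delta(4,b)=1$, $\delta(5,a)=\delta(5,b)=5$. $\mathcal{C}om(\Sigma)$ is the set of regular languages over $\Sigma$ whose syntactic monoid ($\Sigma^*/\equiv_L$, where $x\equiv_L y$ iff $uxv\in L\Leftrightarrow uyv\in L$ for all $u,v$) is commutative; $Pol(\mathcal{C}om)(\Sigma)$ is the set of finite unions of languages $L_0a_1L_1\cdots a_kL_k$ with $k\ge0$, $a_i\in\Sigma$, $L_i\in\mathcal{C}om(\Sigma)$. *)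

theory Defs
  imports Main
begin

datatype ab = a | b

definition lconc :: "'s list set \<Rightarrow> 's list set \<Rightarrow> 's list set" where
  "lconc L M = {u @ v | u v. u \<in> L \<and> v \<in> M}"

definition regular :: "'s list set \<Rightarrow> bool" where
  "regular L \<longleftrightarrow> (\<exists>(Q :: nat set) q0 (\<delta> :: nat \<Rightarrow> 's \<Rightarrow> nat) F.
      finite Q \<and> q0 \<in> Q \<and> F \<subseteq> Q \<and> (\<forall>q\<in>Q. \<forall>c. \<delta> q c \<in> Q) \<and>
      L = {w. foldl \<delta> q0 w \<in> F})"

definition synt_equiv :: "'s list set \<Rightarrow> 's list \<Rightarrow> 's list \<Rightarrow> bool" where
  "synt_equiv L x y \<longleftrightarrow> (\<forall>u v. u @ x @ v \<in> L \<longleftrightarrow> u @ y @ v \<in> L)"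

definition synt_monoid_commutative :: "'s list set \<Rightarrow> bool" where
  "synt_monoid_commutative L \<longleftrightarrow> (\<forall>x y. synt_equiv L (x @ y) (y @ x))"

text \<open>Com(Sigma), Sigma being the whole (finite) letter type.\<close>
definition Com :: "'s list set set" where
  "Com = {L. regular L \<and> synt_monoid_commutative L}"

text \<open>Marked product L0 a1 L1 ... ak Lk.\<close>
fun marked_prod :: "'s list set \<Rightarrow> ('s \<times> 's list set) list \<Rightarrow> 's list set" where
  "marked_prod L0 [] = L0"
| "marked_prod L0 ((c, L1) # rest) = lconc L0 (lconc {[c]} (marked_prod L1 rest))"

definition PolCom :: "'s list set set" where
  "PolCom = {L. \<exists>ms :: ('s list set \<times> ('s \<times> 's list set) list) list.
      (\<forall>(L0, rest) \<in> set ms. L0 \<in> Com \<and> (\<forall>(c, Li) \<in> set rest. Li \<in> Com)) \<and>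
      L = (\<Union>(L0, rest) \<in> set ms. marked_prod L0 rest)}"

definition delta5 :: "nat \<Rightarrow> ab \<Rightarrow> nat" where
  "delta5 q c =
     (if q = 1 then 2
      else if q = 2 then (if c = a then 5 else 3)
      else if q = 3 then (if c = a then 4 else 5)
      else if q = 4 then (if c = a then 3 else 1)
      else if q = 5 then 5
      else q)"

definition L5 :: "ab list set" where
  "L5 = {w. foldl delta5 1 w \<in> {5}}"

end

theory Submission
  imports Defs "HOL-Library.Multiset" "HOL-Library.FuncSet"
begin

definition xp :: "nat \<Rightarrow> ab list" where
  "xp m = concat (replicate m [a,b,a,b])"

lemma xp_0[simp]: "xp 0 = []" by (simp add: xp_def)
lemma xp_Suc: "xp (Suc m) = [a,b,a,b] @ xp m" by (simp add: xp_def)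
lemma xp_add: "xp (i + j) = xp i @ xp j"
  by (induction i) (simp_all add: xp_Suc)

lemma xp_split: "N \<le> n \<Longrightarrow> xp n = xp N @ xp (n - N)"
  using xp_add[of N "n - N"] by simp

definition good :: "nat \<Rightarrow> nat \<Rightarrow> ab list set \<Rightarrow> bool" where
  "good N P K \<longleftrightarrow> (\<forall>s n c. N \<le> n \<longrightarrow> (s @ xp n \<in> K \<longleftrightarrow> s @ xp (n + c * P) \<in> K))"

lemma good_mono: "good N P K \<Longrightarrow> good (N + N') (P * P') K"
  unfolding good_def
proof (intro allI impI)
  fix s n c assume g: "\<forall>s n c. N \<le> n \<longrightarrow> (s @ xp n \<in> K) = (s @ xp (n + c * P) \<in> K)"
    and "N + N' \<le> n"
  then show "(s @ xp n \<in> K) = (s @ xp (n + c * (P * P')) \<in> K)"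
    using g[rule_format, of n s "c * P'"] by (simp add: mult.assoc mult.commute mult.left_commute)
qed

lemma foldl_closed:
  assumes "\<forall>q\<in>Q. \<forall>c. \<delta> q c \<in> Q" "q \<in> Q"
  shows "foldl \<delta> q w \<in> Q"
  using assms(2) by (induction w arbitrary: q) (use assms(1) in auto)

lemma reg_good:
  assumes "regular K"
  shows "\<exists>N P. 0 < P \<and> good N P K"
proof -
  obtain Q q0 \<delta> F where fin: "finite (Q :: nat set)" and q0: "q0 \<in> Q" and
    cl: "\<forall>q\<in>Q. \<forall>c. \<delta> q c \<in> Q" and K: "K = {w. foldl \<delta> q0 w \<in> F}"
    using assms unfolding regular_def by blast
  define g where "g n = restrict (\<lambda>q. foldl \<delta> q (xp n)) Q" for n
  have "range g \<subseteq> PiE Q (\<lambda>_. Q)"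
    using foldl_closed[OF cl] by (auto simp: g_def restrict_PiE_iff)
  moreover have "finite (PiE Q (\<lambda>_. Q))" using fin by (simp add: finite_PiE)
  ultimately have "finite (range g)" by (rule finite_subset)
  hence "\<not> inj g" using finite_imageD[of g UNIV] by auto
  then obtain m m' where mm: "m \<noteq> m'" "g m = g m'" unfolding inj_def by blast
  then obtain m1 m2 where m12: "m1 < m2" "g m1 = g m2"
    by (metis linorder_neqE_nat)
  have eq: "foldl \<delta> q (xp m1) = foldl \<delta> q (xp m2)" if "q \<in> Q" for q
    using fun_cong[OF m12(2), of q] that by (simp add: g_def)
  define P where "P = m2 - m1"
  have step: "foldl \<delta> q (xp (n + P)) = foldl \<delta> q (xp n)" if hq: "q \<in> Q" and hn: "m1 \<le> n" for q n
  proof -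
    obtain d where d: "n = m1 + d" using hn le_Suc_ex by blast
    have "n + P = m2 + d" using d m12(1) by (simp add: P_def)
    hence "foldl \<delta> q (xp (n + P)) = foldl \<delta> (foldl \<delta> q (xp m2)) (xp d)"
      by (simp add: xp_add)
    also have "\<dots> = foldl \<delta> (foldl \<delta> q (xp m1)) (xp d)" using eq[OF hq] by simp
    also have "\<dots> = foldl \<delta> q (xp n)" using d by (simp add: xp_add)
    finally show ?thesis .
  qed
  have stepc: "foldl \<delta> q (xp (n + c * P)) = foldl \<delta> q (xp n)" if hq: "q \<in> Q" and hn: "m1 \<le> n" for q n c
  proof (induction c)
    case 0 then show ?case by simp
  next
    case (Suc c)
    have "foldl \<delta> q (xp (n + Suc c * P)) = foldl \<delta> q (xp ((n + c * P) + P))"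
      by (simp add: algebra_simps)
    also have "\<dots> = foldl \<delta> q (xp (n + c * P))" using step[OF hq, of "n + c * P"] hn by simp
    finally show ?case using Suc by simp
  qed
  have "good m1 P K"
    unfolding good_def
  proof (intro allI impI)
    fix s n c assume "m1 \<le> n"
    have "foldl \<delta> q0 s \<in> Q" using foldl_closed[OF cl q0] .
    then show "(s @ xp n \<in> K) = (s @ xp (n + c * P) \<in> K)"
      using stepc[of "foldl \<delta> q0 s" n c] \<open>m1 \<le> n\<close> by (simp add: K)
  qed
  moreover have "0 < P" using m12(1) by (simp add: P_def)
  ultimately show ?thesis by blast
qed

lemma comm_mset_aux:
  assumes "synt_monoid_commutative K"
  shows "mset u = mset v \<Longrightarrow> (p @ u \<in> K \<longleftrightarrow> p @ v \<in> K)"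
proof (induction u arbitrary: p v)
  case Nil then show ?case by simp
next
  case (Cons c u)
  have "c \<in> set v" using Cons.prems by (metis list.set_intros(1) set_mset_mset)
  then obtain v1 v2 where v: "v = v1 @ c # v2" by (meson split_list)
  have m: "mset u = mset (v1 @ v2)" using Cons.prems v by simp
  have "p @ c # u \<in> K \<longleftrightarrow> (p @ [c]) @ u \<in> K" by simp
  also have "\<dots> \<longleftrightarrow> (p @ [c]) @ (v1 @ v2) \<in> K" using Cons.IH[OF m] .
  also have "\<dots> \<longleftrightarrow> p @ ([c] @ v1) @ v2 \<in> K" by simp
  also have "\<dots> \<longleftrightarrow> p @ (v1 @ [c]) @ v2 \<in> K"
    using assms unfolding synt_monoid_commutative_def synt_equiv_def by blast
  finally show ?case using v by simp
qed

lemma comm_mset: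
  assumes "synt_monoid_commutative K" "mset u = mset v"
  shows "u \<in> K \<longleftrightarrow> v \<in> K"
  using comm_mset_aux[OF assms, of "[]"] by simp

lemma ins:
  assumes "good N P K" "synt_monoid_commutative K" "N \<le> n" "s @ xp n @ r \<in> K"
    "mset z = mset (xp (c * P))"
  shows "s @ z @ xp n @ r \<in> K"
proof -
  have "(s @ r) @ xp n \<in> K"
    using comm_mset[OF assms(2), of "s @ xp n @ r" "(s @ r) @ xp n"] assms(4) by simp
  hence "(s @ r) @ xp (n + c * P) \<in> K" using assms(1,3) unfolding good_def by blast
  moreover have "mset ((s @ r) @ xp (n + c * P)) = mset (s @ z @ xp n @ r)"
    using assms(5) by (simp add: xp_add)
  ultimately show ?thesis using comm_mset[OF assms(2)] by blast
qed

lemma mem_mp_Cons: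
  "w \<in> marked_prod L0 ((c, L1) # rest) \<longleftrightarrow>
    (\<exists>u v. w = u @ [c] @ v \<and> u \<in> L0 \<and> v \<in> marked_prod L1 rest)"
  by (auto simp: lconc_def)

lemma claim:
  assumes "mset z = mset (xp (c * P))"
  shows "\<forall>K\<in>insert L0 (snd ` set rest). good N P K \<and> synt_monoid_commutative K \<Longrightarrow>
    (length rest + 1) * N \<le> n \<Longrightarrow> s @ xp n @ r \<in> marked_prod L0 rest \<Longrightarrow>
    \<exists>i \<le> n. s @ xp i @ z @ xp (n - i) @ r \<in> marked_prod L0 rest"
proof (induction rest arbitrary: L0 s n)
  case Nil
  then have "s @ z @ xp n @ r \<in> L0" using ins[OF _ _ _ _ assms] by auto
  then show ?case by (intro exI[of _ 0]) simp
next
  case (Cons cl rest)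
  obtain c1 L1 where cl: "cl = (c1, L1)" by fastforce
  from Cons.prems(3) obtain u v where uv: "s @ xp n @ r = u @ [c1] @ v" "u \<in> L0"
    "v \<in> marked_prod L1 rest" unfolding cl mem_mp_Cons by blast
  have Nn: "N \<le> n" using Cons.prems(2) by simp
  have L0g: "good N P L0" "synt_monoid_commutative L0" using Cons.prems(1) by auto
  have sp: "s @ xp n @ r = (s @ xp N) @ (xp (n - N) @ r)" using xp_split[OF Nn] by simp
  from uv(1)[unfolded sp, symmetric] obtain us where
    us: "(u = (s @ xp N) @ us \<and> us @ [c1] @ v = xp (n - N) @ r) \<or>
         (u @ us = s @ xp N \<and> [c1] @ v = us @ xp (n - N) @ r)"
    unfolding append_eq_append_conv2 by blast
  show ?case
  proof (cases "u = (s @ xp N) @ us \<and> us @ [c1] @ v = xp (n - N) @ r")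
    case True
    have "s @ z @ xp N @ us \<in> L0"
      using ins[OF L0g le_refl _ assms, of s us] True uv(2) by simp
    moreover have "s @ xp 0 @ z @ xp (n - 0) @ r = (s @ z @ xp N @ us) @ [c1] @ v"
      using True xp_split[OF Nn] by simp
    ultimately show ?thesis using uv(3) unfolding cl mem_mp_Cons by blast
  next
    case False
    with us have us2: "u @ us = s @ xp N" "[c1] @ v = us @ xp (n - N) @ r" by auto
    show ?thesis
    proof (cases us)
      case Nil
      then have "u = (s @ xp N) @ [] \<and> [] @ [c1] @ v = xp (n - N) @ r" using us2 by simp
      then show ?thesis using False Nil by simp
    next
      case (Cons c' v')
      with us2 have c': "c' = c1" "v = v' @ xp (n - N) @ r" by auto
      have IHa: "\<forall>K\<in>insert L1 (snd ` set rest). good N P K \<and> synt_monoid_commutative K"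
        using Cons.prems(1) cl by auto
      have IHb: "(length rest + 1) * N \<le> n - N" using Cons.prems(2) by simp
      obtain i where i: "i \<le> n - N" "v' @ xp i @ z @ xp (n - N - i) @ r \<in> marked_prod L1 rest"
        using Cons.IH[OF IHa IHb] uv(3) c' by auto
      have "s @ xp (N + i) @ z @ xp (n - (N + i)) @ r
          = u @ [c1] @ (v' @ xp i @ z @ xp (n - N - i) @ r)"
      proof -
        have "u @ [c1] @ v' = s @ xp N" using us2(1) Cons c' by simp
        then show ?thesis by (simp add: xp_add diff_diff_add)
      qed
      then have "s @ xp (N + i) @ z @ xp (n - (N + i)) @ r \<in> marked_prod L0 (cl # rest)"
        using i(2) uv(2) unfolding cl mem_mp_Cons by blast
      moreover have "N + i \<le> n" using i(1) Nn by simp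
      ultimately show ?thesis by blast
    qed
  qed
qed

lemma good_all: "\<forall>K\<in>set Ks. K \<in> Com \<Longrightarrow> \<exists>N P. 0 < P \<and> (\<forall>K\<in>set Ks. good N P K)"
proof (induction Ks)
  case Nil then show ?case by (intro exI[of _ 0] exI[of _ 1]) simp
next
  case (Cons K Ks)
  have "regular K" using Cons.prems by (simp add: Com_def)
  then obtain N1 P1 where 1: "0 < P1" "good N1 P1 K" using reg_good by blast
  obtain N2 P2 where 2: "0 < P2" "\<forall>K\<in>set Ks. good N2 P2 K" using Cons by auto
  have "good (N1 + N2) (P1 * P2) K" using good_mono[OF 1(2)] .
  moreover have "\<forall>K\<in>set Ks. good (N1 + N2) (P1 * P2) K"
    using 2(2) good_mono[of N2 P2 _ N1 P1] by (simp add: add.commute mult.commute)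
  ultimately show ?case using 1(1) 2(1) by (intro exI[of _ "N1 + N2"] exI[of _ "P1 * P2"]) simp
qed

lemma d1: "foldl delta5 1 (xp m) = 1"
  by (induction m) (simp_all add: xp_Suc delta5_def)

lemma d3: "foldl delta5 3 (xp m) = 3"
  by (induction m) (simp_all add: xp_Suc delta5_def)

lemma sub_concat: "xs \<in> set xss \<Longrightarrow> set xs \<subseteq> set (concat xss)" by auto

theorem mainTheorem16:
  shows "L5 \<notin> (PolCom :: ab list set set)"
proof
  assume "L5 \<in> (PolCom :: ab list set set)"
  then obtain ms :: "(ab list set \<times> (ab \<times> ab list set) list) list" where
    hms: "\<forall>(L0, rest) \<in> set ms. L0 \<in> Com \<and> (\<forall>(c, Li) \<in> set rest. Li \<in> Com)" and
    eq: "L5 = (\<Union>(L0, rest) \<in> set ms. marked_prod L0 rest)"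
    unfolding PolCom_def by blast
  define Ks where "Ks = concat (map (\<lambda>(L0, rest). L0 # map snd rest) ms)"
  have KsCom: "\<forall>K\<in>set Ks. K \<in> Com"
  proof
    fix K assume "K \<in> set Ks"
    then obtain L0 rest where lr: "(L0, rest) \<in> set ms" "K \<in> set (L0 # map snd rest)"
      unfolding Ks_def by auto
    have h: "L0 \<in> Com" "\<forall>(c, Li) \<in> set rest. Li \<in> Com" using hms lr(1) by blast+
    show "K \<in> Com" using lr(2) h by auto
  qed
  then obtain N P where NP: "0 < P" "\<forall>K\<in>set Ks. good N P K" using good_all by blast
  define k where "k = sum_list (map (\<lambda>(L0, rest). length rest) ms)"
  define n where "n = (k + 1) * N"
  have "xp n @ [a, a] \<in> L5" using d1[of n] by (simp add: L5_def delta5_def)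
  hence "xp n @ [a, a] \<in> (\<Union>(L0, rest) \<in> set ms. marked_prod L0 rest)" using eq by simp
  then obtain L0 rest where mem: "(L0, rest) \<in> set ms" "xp n @ [a, a] \<in> marked_prod L0 rest"
    by fast
  have "length rest \<in> set (map (\<lambda>(L0, rest). length rest) ms)" using mem(1) by force
  hence "length rest \<le> k" unfolding k_def by (rule member_le_sum_list) simp
  hence len: "(length rest + 1) * N \<le> n" by (simp add: n_def)
  have "L0 # map snd rest \<in> set (map (\<lambda>(L0, rest). L0 # map snd rest) ms)"
    using mem(1) by force
  hence "set (L0 # map snd rest) \<subseteq> set Ks" unfolding Ks_def by (rule sub_concat)
  hence sub: "insert L0 (snd ` set rest) \<subseteq> set Ks" by simp
  have allK: "\<forall>K\<in>insert L0 (snd ` set rest). good N P K \<and> synt_monoid_commutative K"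
  proof
    fix K assume K: "K \<in> insert L0 (snd ` set rest)"
    hence "K \<in> set Ks" using sub by blast
    moreover have "K \<in> Com" using \<open>K \<in> set Ks\<close> KsCom by blast
    ultimately show "good N P K \<and> synt_monoid_commutative K" using NP(2) by (auto simp: Com_def)
  qed
  define z where "z = [b, b, a, a] @ xp (P - 1)"
  have P: "P = Suc (P - 1)" using NP(1) by simp
  have mz: "mset z = mset (xp (1 * P))"
    by (subst P) (simp add: z_def xp_Suc)
  obtain i where i: "i \<le> n" "[] @ xp i @ z @ xp (n - i) @ [a, a] \<in> marked_prod L0 rest"
    using claim[OF mz allK len, of "[]" "[a, a]"] mem(2) by auto
  hence "xp i @ z @ xp (n - i) @ [a, a] \<in> L5" using eq mem(1) by auto
  moreover have "foldl delta5 1 (xp i @ z @ xp (n - i) @ [a, a]) = 3"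
    using d1[of i] d3[of "P - 1"] d3[of "n - i"] by (simp add: z_def delta5_def)
  ultimately show False by (simp add: L5_def)
qed

end
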